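(* Let $G$ be a finite simple graph with at least one edge such that $\chi(G) > \frac{\Delta(G)}{2} + 1$. Then ${\rm vs}_{\chi}(G) = {\rm es}_{\chi}(G)$.
   Context: $\chi(G)$ is the chromatic number and $\Delta(G)$ the maximum degree of $G$. The chromatic vertex stability number ${\rm vs}_{\chi}(G)$ is the minimum number of vertices of $G$ whose deletion results in a graph $H$ with $\chi(H) = \chi(G)-1$. The chromatic edge stability number ${\rm es}_{\chi}(G)$ is the minimum number of edges of $G$ whose deletion results in a graph $H$ with $\chi(H) = \chi(G)-1$. *)

theory Defs
  imports Complex_Main
begin

definition simple_graph :: "'a set \<Rightarrow> 'a set set \<Rightarrow> bool" where
  "simple_graph V E \<longleftrightarrow> finite V \<and>
     (\<forall>e\<in>E. \<exists>u v. u \<noteq> v \<and> u \<in> V \<and> v \<in> V \<and> e = {u, v})"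

definition colourable :: "'a set \<Rightarrow> 'a set set \<Rightarrow> nat \<Rightarrow> bool" where
  "colourable V E k \<longleftrightarrow> (\<exists>f :: 'a \<Rightarrow> nat. (\<forall>v\<in>V. f v < k) \<and>
     (\<forall>u v. {u, v} \<in> E \<longrightarrow> u \<noteq> v \<longrightarrow> f u \<noteq> f v))"

definition chromatic_number :: "'a set \<Rightarrow> 'a set set \<Rightarrow> nat" where
  "chromatic_number V E = (LEAST k. colourable V E k)"

definition degree :: "'a set set \<Rightarrow> 'a \<Rightarrow> nat" where
  "degree E v = card {e \<in> E. v \<in> e}"

definition max_degree :: "'a set \<Rightarrow> 'a set set \<Rightarrow> nat" where
  "max_degree V E = Max (degree E ` V)"

definition delete_vertices :: "'a set \<Rightarrow> 'a set set \<Rightarrow> 'a set \<Rightarrow> 'a set set" where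
  "delete_vertices V E S = {e \<in> E. e \<inter> S = {}}"

definition vs_chi :: "'a set \<Rightarrow> 'a set set \<Rightarrow> nat" where
  "vs_chi V E = (LEAST k. \<exists>S. S \<subseteq> V \<and> card S = k \<and>
      chromatic_number (V - S) (delete_vertices V E S) = chromatic_number V E - 1)"

definition es_chi :: "'a set \<Rightarrow> 'a set set \<Rightarrow> nat" where
  "es_chi V E = (LEAST k. \<exists>F. F \<subseteq> E \<and> card F = k \<and>
      chromatic_number V (E - F) = chromatic_number V E - 1)"

end

theory Submission
  imports Defs
begin

lemma sg_edge:
  assumes "simple_graph V E" "e \<in> E"
  shows "e \<subseteq> V \<and> (\<exists>u v. u \<noteq> v \<and> e = {u, v})"
proof -
  obtain u v where "u \<noteq> v" "u \<in> V" "v \<in> V" "e = {u, v}"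
    using assms unfolding simple_graph_def by meson
  then show ?thesis by auto
qed

lemma sg_sub: assumes "simple_graph V E" "e \<in> E" shows "e \<subseteq> V"
  using sg_edge[OF assms] by (rule conjunct1)

lemma sg_finE:
  assumes "simple_graph V E" shows "finite E"
proof -
  have "E \<subseteq> Pow V" using sg_sub[OF assms] by blast
  moreover have "finite V" using assms unfolding simple_graph_def by simp
  ultimately show ?thesis by (meson finite_Pow_iff finite_subset)
qed

lemma chi_le: "colourable V E k \<Longrightarrow> chromatic_number V E \<le> k"
  unfolding chromatic_number_def by (rule Least_le)

lemma col_exists:
  assumes "finite V" "\<forall>e\<in>E. e \<subseteq> V"
  shows "colourable V E (chromatic_number V E)"
proof -
  obtain h where h: "bij_betw h V {0..<card V}" using ex_bij_betw_finite_nat[OF assms(1)] by blast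
  have "colourable V E (card V)"
    unfolding colourable_def
  proof (intro exI[of _ h] conjI allI impI ballI)
    fix v assume "v \<in> V" then show "h v < card V" using h bij_betwE by fastforce
  next
    fix u v assume "{u, v} \<in> E" "u \<noteq> v"
    then have "u \<in> V" "v \<in> V" using assms(2) by auto
    then show "h u \<noteq> h v" using h \<open>u \<noteq> v\<close> unfolding bij_betw_def inj_on_def by blast
  qed
  then show ?thesis unfolding chromatic_number_def by (rule LeastI)
qed

lemma col_mono:
  "colourable V E k \<Longrightarrow> V' \<subseteq> V \<Longrightarrow> E' \<subseteq> E \<Longrightarrow> colourable V' E' k"
  unfolding colourable_def by blast

lemma col_ge2:
  "colourable V E k \<Longrightarrow> {u, v} \<in> E \<Longrightarrow> u \<noteq> v \<Longrightarrow> u \<in> V \<Longrightarrow> v \<in> V \<Longrightarrow> k \<ge> 2"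
proof -
  assume a: "colourable V E k" "{u, v} \<in> E" "u \<noteq> v" "u \<in> V" "v \<in> V"
  then obtain f where f: "\<forall>v\<in>V. f v < k" "f u \<noteq> f v" unfolding colourable_def by blast
  then have "f u < k" "f v < k" using a by auto
  then show "k \<ge> 2" using f(2) by linarith
qed

lemma col_add:
  assumes "colourable W E1 c" "\<forall>e\<in>E2. e \<subseteq> insert a W" "\<forall>e\<in>E2 - E1. a \<in> e"
  shows "colourable (insert a W) E2 (Suc c)"
proof -
  obtain f where f: "\<forall>v\<in>W. f v < c" "\<forall>u v. {u, v} \<in> E1 \<longrightarrow> u \<noteq> v \<longrightarrow> f u \<noteq> f v"
    using assms(1) unfolding colourable_def by blast
  show ?thesis unfolding colourable_def
  proof (intro exI[of _ "f(a := c)"] conjI allI impI ballI)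
    fix v assume "v \<in> insert a W" then show "(f(a := c)) v < Suc c" using f(1) by auto
  next
    fix u v assume uv: "{u, v} \<in> E2" "u \<noteq> v"
    then have "{u, v} \<subseteq> insert a W" using assms(2) by blast
    then have sub: "u \<in> insert a W" "v \<in> insert a W" by simp_all
    show "(f(a := c)) u \<noteq> (f(a := c)) v"
    proof (cases "u = a \<or> v = a")
      case True
      then show ?thesis
      proof
        assume "u = a"
        then have "v \<in> W" "v \<noteq> a" using sub uv(2) by auto
        then have "f v < c" using f(1) by blast
        then show ?thesis using \<open>u = a\<close> \<open>v \<noteq> a\<close> by simp
      next
        assume "v = a"
        then have "u \<in> W" "u \<noteq> a" using sub uv(2) by auto
        then have "f u < c" using f(1) by blast
        then show ?thesis using \<open>v = a\<close> \<open>u \<noteq> a\<close> by simp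
      qed
    next
      case False
      have "{u, v} \<in> E1"
      proof (rule ccontr)
        assume "{u, v} \<notin> E1"
        then have "{u, v} \<in> E2 - E1" using uv(1) by simp
        with assms(3) have "a \<in> {u, v}" by (rule bspec)
        then show False using False by auto
      qed
      then have "f u \<noteq> f v" using f(2) uv(2) by blast
      then show ?thesis using False by simp
    qed
  qed
qed

lemma exact_edges:
  assumes sg: "simple_graph V E" and fin: "finite F"
  shows "F \<subseteq> E \<Longrightarrow> chromatic_number V (E - F) \<le> chromatic_number V E - 1
    \<Longrightarrow> 1 \<le> chromatic_number V E
    \<Longrightarrow> \<exists>F'\<subseteq>F. chromatic_number V (E - F') = chromatic_number V E - 1"
  using fin
proof (induction F rule: finite_induct)
  case empty
  then show ?case by simp
next
  case (insert e F)
  show ?case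
  proof (cases "chromatic_number V (E - F) \<le> chromatic_number V E - 1")
    case True
    then show ?thesis using insert by blast
  next
    case False
    have finV: "finite V" using sg unfolding simple_graph_def by simp
    have eE: "e \<in> E" using insert by blast
    have "e \<subseteq> V \<and> (\<exists>u v. u \<noteq> v \<and> e = {u, v})" using sg_edge[OF sg eE] .
    then obtain u v where uv: "u \<noteq> v" "e = {u, v}" "e \<subseteq> V" by blast
    have c1: "colourable V (E - insert e F) (chromatic_number V (E - insert e F))"
      by (rule col_exists[OF finV]) (use sg_sub[OF sg] in blast)
    have "colourable (insert u V) (E - F) (Suc (chromatic_number V (E - insert e F)))"
    proof (rule col_add[OF c1])
      show "\<forall>e\<in>E - F. e \<subseteq> insert u V" using sg_sub[OF sg] by blast
      show "\<forall>e'\<in>E - F - (E - insert e F). u \<in> e'" using uv by blast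
    qed
    moreover have "insert u V = V" using uv by auto
    ultimately have "chromatic_number V (E - F) \<le> Suc (chromatic_number V (E - insert e F))"
      using chi_le by metis
    then have "chromatic_number V (E - insert e F) = chromatic_number V E - 1"
      using False insert.prems by linarith
    then show ?thesis by blast
  qed
qed

lemma del_empty: "delete_vertices V E {} = E"
  unfolding delete_vertices_def by auto

lemma exact_verts:
  assumes sg: "simple_graph V E" and fin: "finite S"
  shows "S \<subseteq> V \<Longrightarrow> chromatic_number (V - S) (delete_vertices V E S) \<le> chromatic_number V E - 1
    \<Longrightarrow> 1 \<le> chromatic_number V E
    \<Longrightarrow> \<exists>S'\<subseteq>S. chromatic_number (V - S') (delete_vertices V E S') = chromatic_number V E - 1"
  using fin
proof (induction S rule: finite_induct)
  case empty
  then show ?case by (simp add: del_empty)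
next
  case (insert x S)
  show ?case
  proof (cases "chromatic_number (V - S) (delete_vertices V E S) \<le> chromatic_number V E - 1")
    case True
    then show ?thesis using insert by blast
  next
    case False
    have finV: "finite V" using sg unfolding simple_graph_def by simp
    have xV: "x \<in> V" using insert by blast
    have c1: "colourable (V - insert x S) (delete_vertices V E (insert x S))
       (chromatic_number (V - insert x S) (delete_vertices V E (insert x S)))"
      by (rule col_exists) (use finV sg_sub[OF sg] in \<open>auto simp: delete_vertices_def\<close>)
    have "colourable (insert x (V - insert x S)) (delete_vertices V E S)
       (Suc (chromatic_number (V - insert x S) (delete_vertices V E (insert x S))))"
      by (rule col_add[OF c1]) (use sg_sub[OF sg] in \<open>auto simp: delete_vertices_def\<close>)
    moreover have "insert x (V - insert x S) = V - S" using xV insert.hyps by auto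
    ultimately have "chromatic_number (V - S) (delete_vertices V E S)
       \<le> Suc (chromatic_number (V - insert x S) (delete_vertices V E (insert x S)))"
      using chi_le by metis
    then have "chromatic_number (V - insert x S) (delete_vertices V E (insert x S)) = chromatic_number V E - 1"
      using False insert.prems by linarith
    then show ?thesis by blast
  qed
qed

lemma pigeon:
  fixes N :: "'a set" and f :: "'a \<Rightarrow> nat"
  assumes "finite N" "card N \<le> 2 * m - 1" "1 \<le> m"
  shows "\<exists>j<m. card {u\<in>N. f u = j} \<le> 1"
proof (rule ccontr)
  assume "\<not> ?thesis"
  then have ge: "\<And>j. j < m \<Longrightarrow> 2 \<le> card {u\<in>N. f u = j}" by force
  have "(\<Sum>j<m. card {u\<in>N. f u = j}) = card (\<Union>j<m. {u\<in>N. f u = j})"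
    by (rule card_UN_disjoint[symmetric]) (use assms(1) in auto)
  also have "\<dots> \<le> card N" by (rule card_mono[OF assms(1)]) auto
  finally have le: "(\<Sum>j<m. card {u\<in>N. f u = j}) \<le> card N" .
  have "(\<Sum>j<m. (2::nat)) \<le> (\<Sum>j<m. card {u\<in>N. f u = j})"
    by (rule sum_mono) (simp add: ge)
  then have "2 * m \<le> card N" using le by simp
  then show False using assms(2,3) by linarith
qed

lemma extend:
  assumes sg: "simple_graph V E" and m1: "1 \<le> m"
    and deg: "\<forall>x\<in>V. degree E x \<le> 2 * m - 1"
    and fin: "finite S" and SV: "S \<subseteq> V"
  shows "\<forall>F0 f. F0 \<subseteq> E \<longrightarrow> (\<forall>v\<in>V - S. f v < m) \<longrightarrow>
     (\<forall>u v. {u, v} \<in> E - F0 \<longrightarrow> {u, v} \<inter> S = {} \<longrightarrow> u \<noteq> v \<longrightarrow> f u \<noteq> f v) \<longrightarrow>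
     (\<exists>F g. F \<subseteq> E \<and> card F \<le> card F0 + card S \<and> (\<forall>v\<in>V. g v < m) \<and>
        (\<forall>u v. {u, v} \<in> E - F \<longrightarrow> u \<noteq> v \<longrightarrow> g u \<noteq> g v))"
  using fin SV
proof (induction S rule: finite_subset_induct)
  case empty
  show ?case
  proof (intro allI impI)
    fix F0 f
    assume h: "F0 \<subseteq> E" "\<forall>v\<in>V - {}. f v < m"
      "\<forall>u v. {u, v} \<in> E - F0 \<longrightarrow> {u, v} \<inter> {} = {} \<longrightarrow> u \<noteq> v \<longrightarrow> f u \<noteq> f v"
    show "\<exists>F g. F \<subseteq> E \<and> card F \<le> card F0 + card {} \<and> (\<forall>v\<in>V. g v < m) \<and>
        (\<forall>u v. {u, v} \<in> E - F \<longrightarrow> u \<noteq> v \<longrightarrow> g u \<noteq> g v)"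
      by (rule exI[of _ F0], rule exI[of _ f]) (use h in simp)
  qed
next
  case (insert x S')
  have finE: "finite E" by (rule sg_finE[OF sg])
  show ?case
  proof (intro allI impI)
    fix F0 f
    assume F0E: "F0 \<subseteq> E" and fm: "\<forall>v\<in>V - insert x S'. f v < m"
      and fp: "\<forall>u v. {u, v} \<in> E - F0 \<longrightarrow> {u, v} \<inter> insert x S' = {} \<longrightarrow> u \<noteq> v \<longrightarrow> f u \<noteq> f v"
    define N where "N = {u. {x, u} \<in> E - F0 \<and> u \<notin> S' \<and> u \<noteq> x}"
    have NV: "N \<subseteq> V"
    proof
      fix u assume "u \<in> N"
      then have "{x, u} \<in> E" unfolding N_def by simp
      then have "{x, u} \<subseteq> V" by (rule sg_sub[OF sg])
      then show "u \<in> V" by simp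
    qed
    have finV: "finite V" using sg unfolding simple_graph_def by simp
    have finN: "finite N" using NV finV finite_subset by blast
    have inj: "inj_on (\<lambda>u. {x, u}) N"
      unfolding inj_on_def N_def by (auto simp: doubleton_eq_iff)
    have img: "(\<lambda>u. {x, u}) ` N \<subseteq> {e \<in> E. x \<in> e}" unfolding N_def by auto
    have "card N \<le> card {e \<in> E. x \<in> e}"
      by (rule card_inj_on_le[OF inj img]) (use finE in simp)
    then have cN: "card N \<le> 2 * m - 1" using deg insert.hyps(2) unfolding degree_def by fastforce
    obtain j where j: "j < m" "card {u\<in>N. f u = j} \<le> 1" using pigeon[OF finN cN m1] by blast
    define X where "X = (\<lambda>u. {x, u}) ` {u\<in>N. f u = j}"
    define F0' where "F0' = F0 \<union> X"
    have XE: "X \<subseteq> E" unfolding X_def N_def by auto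
    have cX: "card X \<le> 1" unfolding X_def using card_image_le[of "{u\<in>N. f u = j}" "\<lambda>u. {x, u}"] j(2) finN
      by simp
    have finF0: "finite F0" using F0E finE finite_subset by blast
    have finX: "finite X" using XE finE finite_subset by blast
    have cF0': "card F0' \<le> card F0 + 1" unfolding F0'_def using card_Un_le[of F0 X] cX by linarith
    have F0'E: "F0' \<subseteq> E" unfolding F0'_def using F0E XE by blast
    define f' where "f' = f(x := j)"
    have f'm: "\<forall>v\<in>V - S'. f' v < m"
    proof
      fix v assume "v \<in> V - S'"
      then show "f' v < m" unfolding f'_def using fm j(1) by (cases "v = x") auto
    qed
    have f'p: "\<forall>u v. {u, v} \<in> E - F0' \<longrightarrow> {u, v} \<inter> S' = {} \<longrightarrow> u \<noteq> v \<longrightarrow> f' u \<noteq> f' v"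
    proof (intro allI impI)
      fix a b assume ab: "{a, b} \<in> E - F0'" "{a, b} \<inter> S' = {}" "a \<noteq> b"
      have key: "f' y \<noteq> f' x" if yx: "{x, y} \<in> E - F0'" "y \<notin> S'" "y \<noteq> x" for y
      proof
        assume eq: "f' y = f' x"
        have "f y = j" using eq yx(3) unfolding f'_def by simp
        moreover have "y \<in> N" unfolding N_def using yx F0'_def by simp
        ultimately have "{x, y} \<in> X" unfolding X_def by blast
        then show False using yx(1) unfolding F0'_def by simp
      qed
      show "f' a \<noteq> f' b"
      proof (cases "a = x")
        case True
        then show ?thesis using key[of b] ab by auto
      next
        case ax: False
        show ?thesis
        proof (cases "b = x")
          case True
          have "{x, a} \<in> E - F0'" using ab(1) True by (simp add: insert_commute)
          then show ?thesis using key[of a] ab True by auto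
        next
          case bx: False
          have "{a, b} \<in> E - F0" using ab(1) unfolding F0'_def by simp
          moreover have "{a, b} \<inter> insert x S' = {}" using ab(2) ax bx by simp
          ultimately have "f a \<noteq> f b" using fp ab(3) by blast
          then show ?thesis unfolding f'_def using ax bx by simp
        qed
      qed
    qed
    have exFg: "\<exists>F g. F \<subseteq> E \<and> card F \<le> card F0' + card S' \<and> (\<forall>v\<in>V. g v < m) \<and>
        (\<forall>u v. {u, v} \<in> E - F \<longrightarrow> u \<noteq> v \<longrightarrow> g u \<noteq> g v)"
      using insert.IH[rule_format, OF F0'E f'm[rule_format] f'p[rule_format]] .
    then obtain F g where Fg: "F \<subseteq> E" "card F \<le> card F0' + card S'" "\<forall>v\<in>V. g v < m"
        "\<forall>u v. {u, v} \<in> E - F \<longrightarrow> u \<noteq> v \<longrightarrow> g u \<noteq> g v"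
      by blast
    have "card (insert x S') = Suc (card S')" using insert.hyps(1,3) by simp
    then have "card F \<le> card F0 + card (insert x S')" using Fg(2) cF0' by linarith
    then show "\<exists>F g. F \<subseteq> E \<and> card F \<le> card F0 + card (insert x S') \<and> (\<forall>v\<in>V. g v < m) \<and>
        (\<forall>u v. {u, v} \<in> E - F \<longrightarrow> u \<noteq> v \<longrightarrow> g u \<noteq> g v)"
      using Fg by blast
  qed
qed

lemma del_all:
  assumes sg: "simple_graph V E" shows "delete_vertices V E V = {}"
proof -
  have "e \<inter> V \<noteq> {}" if "e \<in> E" for e
  proof -
    have "e \<subseteq> V \<and> (\<exists>u v. u \<noteq> v \<and> e = {u, v})" by (rule sg_edge[OF sg that])
    then obtain u v where "e \<subseteq> V" "e = {u, v}" by blast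
    then show ?thesis by auto
  qed
  then show ?thesis unfolding delete_vertices_def by blast
qed

theorem theorem4:
  fixes V :: "'a set" and E :: "'a set set"
  assumes "simple_graph V E"
    and "E \<noteq> {}"
    and "real (chromatic_number V E) > real (max_degree V E) / 2 + 1"
  shows "vs_chi V E = es_chi V E"
proof -
  note sg = assms(1)
  define k where "k = chromatic_number V E"
  have finV: "finite V" using sg unfolding simple_graph_def by simp
  have finE: "finite E" by (rule sg_finE[OF sg])
  have subV: "\<forall>e\<in>E. e \<subseteq> V" using sg_sub[OF sg] by blast
  obtain e0 where e0: "e0 \<in> E" using assms(2) by blast
  have "e0 \<subseteq> V \<and> (\<exists>u v. u \<noteq> v \<and> e0 = {u, v})" by (rule sg_edge[OF sg e0])
  then obtain u v where uv: "u \<noteq> v" "e0 = {u, v}" "e0 \<subseteq> V" by blast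
  have colk: "colourable V E k" unfolding k_def by (rule col_exists[OF finV subV])
  have k2: "k \<ge> 2" by (rule col_ge2[OF colk, of u v]) (use uv e0 in auto)
  define m where "m = k - 1"
  have m1: "1 \<le> m" using k2 unfolding m_def by simp
  have "real (max_degree V E) < 2 * real k - 2" using assms(3) unfolding k_def by simp
  then have "max_degree V E + 2 < 2 * k" by linarith
  then have Dm: "max_degree V E \<le> 2 * m - 1" unfolding m_def by linarith
  have deg: "\<forall>x\<in>V. degree E x \<le> 2 * m - 1"
  proof
    fix x assume "x \<in> V"
    then have "degree E x \<le> max_degree V E" unfolding max_degree_def
      using finV by (simp add: Max_ge)
    then show "degree E x \<le> 2 * m - 1" using Dm by linarith
  qed
  have k1: "1 \<le> chromatic_number V E" using k2 unfolding k_def by simp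
  have "colourable V (E - E) 1" unfolding colourable_def by (intro exI[of _ "\<lambda>_. 0"]) simp
  then have "chromatic_number V (E - E) \<le> chromatic_number V E - 1"
    using chi_le k2 unfolding k_def by fastforce
  then obtain F1 where "F1 \<subseteq> E" "chromatic_number V (E - F1) = chromatic_number V E - 1"
    using exact_edges[OF sg finE] k1 by blast
  then have "\<exists>k F. F \<subseteq> E \<and> card F = k \<and> chromatic_number V (E - F) = chromatic_number V E - 1"
    by blast
  then have "\<exists>F. F \<subseteq> E \<and> card F = es_chi V E \<and> chromatic_number V (E - F) = chromatic_number V E - 1"
    unfolding es_chi_def by (rule LeastI_ex)
  then obtain F0 where F0: "F0 \<subseteq> E" "card F0 = es_chi V E" "chromatic_number V (E - F0) = chromatic_number V E - 1"
    by blast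
  have "colourable (V - V) (delete_vertices V E V) 0" unfolding colourable_def del_all[OF sg] by simp
  then have "chromatic_number (V - V) (delete_vertices V E V) \<le> chromatic_number V E - 1"
    using chi_le by fastforce
  then obtain S1 where "S1 \<subseteq> V" "chromatic_number (V - S1) (delete_vertices V E S1) = chromatic_number V E - 1"
    using exact_verts[OF sg finV] k1 by blast
  then have "\<exists>k S. S \<subseteq> V \<and> card S = k \<and>
      chromatic_number (V - S) (delete_vertices V E S) = chromatic_number V E - 1"
    by blast
  then have "\<exists>S. S \<subseteq> V \<and> card S = vs_chi V E \<and>
      chromatic_number (V - S) (delete_vertices V E S) = chromatic_number V E - 1"
    unfolding vs_chi_def by (rule LeastI_ex)
  then obtain S0 where S0: "S0 \<subseteq> V" "card S0 = vs_chi V E"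
      "chromatic_number (V - S0) (delete_vertices V E S0) = chromatic_number V E - 1"
    by blast
  have A: "vs_chi V E \<le> es_chi V E"
  proof -
    define S where "S = (\<lambda>e. SOME a. a \<in> e) ` F0"
    have finF0: "finite F0" using F0(1) finE finite_subset by blast
    have ne: "\<And>e. e \<in> E \<Longrightarrow> (SOME a. a \<in> e) \<in> e"
    proof -
      fix e assume "e \<in> E"
      then have "e \<subseteq> V \<and> (\<exists>u v. u \<noteq> v \<and> e = {u, v})" by (rule sg_edge[OF sg])
      then have "\<exists>a. a \<in> e" by blast
      then show "(SOME a. a \<in> e) \<in> e" by (rule someI_ex)
    qed
    have SV: "S \<subseteq> V" unfolding S_def using ne F0(1) subV by blast
    have finS: "finite S" unfolding S_def using finF0 by simp
    have cS: "card S \<le> card F0" unfolding S_def by (rule card_image_le[OF finF0])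
    have dsub: "delete_vertices V E S \<subseteq> E - F0"
    proof
      fix e assume "e \<in> delete_vertices V E S"
      then have eE: "e \<in> E" and dis: "e \<inter> S = {}" unfolding delete_vertices_def by auto
      have "e \<notin> F0"
      proof
        assume "e \<in> F0"
        then have "(SOME a. a \<in> e) \<in> S" unfolding S_def by blast
        then show False using ne[OF eE] dis by blast
      qed
      then show "e \<in> E - F0" using eE by blast
    qed
    have cF: "colourable V (E - F0) (chromatic_number V (E - F0))"
      by (rule col_exists[OF finV]) (use subV in blast)
    have "colourable (V - S) (delete_vertices V E S) (chromatic_number V (E - F0))"
      by (rule col_mono[OF cF]) (use dsub in auto)
    then have "chromatic_number (V - S) (delete_vertices V E S) \<le> chromatic_number V E - 1"
      using chi_le F0(3) by metis
    then obtain S' where S': "S' \<subseteq> S" "chromatic_number (V - S') (delete_vertices V E S') = chromatic_number V E - 1"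
      using exact_verts[OF sg finS SV] k1 by blast
    have "vs_chi V E \<le> card S'" unfolding vs_chi_def
      by (rule Least_le) (use S' SV in blast)
    also have "\<dots> \<le> card S" by (rule card_mono[OF finS S'(1)])
    finally show ?thesis using cS F0(2) by linarith
  qed
  have B: "es_chi V E \<le> vs_chi V E"
  proof -
    have finS0: "finite S0" using S0(1) finV finite_subset by blast
    have cS0: "colourable (V - S0) (delete_vertices V E S0) m"
    proof -
      have "colourable (V - S0) (delete_vertices V E S0) (chromatic_number (V - S0) (delete_vertices V E S0))"
        by (rule col_exists) (use finV subV in \<open>auto simp: delete_vertices_def\<close>)
      then show ?thesis using S0(3) unfolding m_def k_def by simp
    qed
    then obtain f where f: "\<forall>v\<in>V - S0. f v < m"
        "\<forall>u v. {u, v} \<in> delete_vertices V E S0 \<longrightarrow> u \<noteq> v \<longrightarrow> f u \<noteq> f v"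
      unfolding colourable_def by blast
    have fp: "\<forall>u v. {u, v} \<in> E - {} \<longrightarrow> {u, v} \<inter> S0 = {} \<longrightarrow> u \<noteq> v \<longrightarrow> f u \<noteq> f v"
      using f(2) unfolding delete_vertices_def by simp
    have "\<exists>F g. F \<subseteq> E \<and> card F \<le> card {} + card S0 \<and> (\<forall>v\<in>V. g v < m) \<and>
        (\<forall>u v. {u, v} \<in> E - F \<longrightarrow> u \<noteq> v \<longrightarrow> g u \<noteq> g v)"
      using extend[OF sg m1 deg finS0 S0(1), THEN spec[of _ "{}"], THEN spec[of _ f]] f(1) fp by simp
    then obtain F g where Fg: "F \<subseteq> E" "card F \<le> card S0" "\<forall>v\<in>V. g v < m"
        "\<forall>u v. {u, v} \<in> E - F \<longrightarrow> u \<noteq> v \<longrightarrow> g u \<noteq> g v"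
      by auto
    have "colourable V (E - F) m" unfolding colourable_def using Fg(3,4) by blast
    then have "chromatic_number V (E - F) \<le> chromatic_number V E - 1"
      using chi_le unfolding m_def k_def by blast
    moreover have finF: "finite F" using Fg(1) finE finite_subset by blast
    ultimately obtain F' where F': "F' \<subseteq> F" "chromatic_number V (E - F') = chromatic_number V E - 1"
      using exact_edges[OF sg finF Fg(1)] k1 by blast
    have "es_chi V E \<le> card F'" unfolding es_chi_def
      by (rule Least_le) (use F' Fg(1) in blast)
    also have "\<dots> \<le> card F" by (rule card_mono[OF finF F'(1)])
    finally show ?thesis using Fg(2) S0(2) by linarith
  qed
  show ?thesis using A B by linarith
qed

end
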